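(* Let $\langle B,\wedge,{}'\rangle$ be an algebra with $\wedge$ binary and ${}'$ unary satisfying $x\wedge(y\wedge z)\approx y\wedge(z\wedge x)$ and $x\approx (x'\wedge y)'\wedge(x'\wedge y')'$. Then $x''=x$ for all $x\in B$. *)

theory Defs
  imports Main
begin

end

theory Submission
  imports Defs
begin

locale L4 =
  fixes B :: "'a set" and meet :: "'a \<Rightarrow> 'a \<Rightarrow> 'a" and cmp :: "'a \<Rightarrow> 'a"
  assumes meet_closed: "\<And>x y. x \<in> B \<Longrightarrow> y \<in> B \<Longrightarrow> meet x y \<in> B"
    and cmp_closed: "\<And>x. x \<in> B \<Longrightarrow> cmp x \<in> B"
    and ax1: "\<And>x y z. x \<in> B \<Longrightarrow> y \<in> B \<Longrightarrow> z \<in> B \<Longrightarrow>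
                meet x (meet y z) = meet y (meet z x)"
    and ax2: "\<And>x y. x \<in> B \<Longrightarrow> y \<in> B \<Longrightarrow>
                x = meet (cmp (meet (cmp x) y)) (cmp (meet (cmp x) (cmp y)))"
begin

lemmas C = meet_closed cmp_closed

definition p where "p x = cmp (meet (cmp x) x)"
definition q where "q x = cmp (meet (cmp x) (cmp x))"

lemma pB: "x \<in> B \<Longrightarrow> p x \<in> B" unfolding p_def by (simp add: C)
lemma qB: "x \<in> B \<Longrightarrow> q x \<in> B" unfolding q_def by (simp add: C)
lemma pq: "x \<in> B \<Longrightarrow> x = meet (p x) (q x)" unfolding p_def q_def by (rule ax2)

lemmas D = C pB qB

lemma e4: "\<lbrakk>x1 \<in> B; x2 \<in> B; x3 \<in> B; x4 \<in> B\<rbrakk> \<Longrightarrow> meet x1 (meet x2 (meet x3 x4)) = meet x3 (meet (meet x4 x2) x1)"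
  by (metis ax1 C)
lemma e5: "\<lbrakk>x1 \<in> B; x2 \<in> B; x3 \<in> B; x4 \<in> B\<rbrakk> \<Longrightarrow> meet (meet x1 x2) (meet x3 x4) = meet x1 (meet (meet x2 x4) x3)"
  by (metis ax1 e4 C)
lemma e7: "\<lbrakk>x1 \<in> B; x2 \<in> B; x3 \<in> B\<rbrakk> \<Longrightarrow> meet x1 (meet (meet x2 (q x3)) (p x3)) = meet (meet x1 x2) x3"
  by (metis e5 pq D)
lemma e8: "\<lbrakk>x1 \<in> B; x2 \<in> B; x3 \<in> B; x4 \<in> B\<rbrakk> \<Longrightarrow> meet (meet (meet x1 x2) x3) x4 = meet x1 (meet x2 (meet x4 x3))"
proof -
  assume h: "x1 \<in> B" "x2 \<in> B" "x3 \<in> B" "x4 \<in> B"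
  have "meet (meet (meet x1 x2) x3) x4 = meet (meet x1 x2) (meet (meet x3 (q x4)) (p x4))"
    using e7 h D by metis
  also have "\<dots> = meet x1 (meet (meet x2 (p x4)) (meet x3 (q x4)))"
    using e5 h D by metis
  also have "\<dots> = meet x1 (meet x2 (meet x4 x3))"
  proof -
    have "meet (meet x2 (p x4)) (meet x3 (q x4)) = meet x2 (meet (meet (p x4) (q x4)) x3)"
      using e5 h D by metis
    then show ?thesis using pq h by metis
  qed
  finally show ?thesis .
qed
lemma e9: "\<lbrakk>x1 \<in> B; x2 \<in> B\<rbrakk> \<Longrightarrow> meet (q x1) (meet x2 (p x1)) = meet x2 x1"
  by (metis ax1 pq D)
lemma e10: "\<lbrakk>x1 \<in> B; x2 \<in> B; x3 \<in> B\<rbrakk> \<Longrightarrow> meet (meet x1 x2) x3 = meet (meet x3 x2) x1"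
proof -
  assume h: "x1 \<in> B" "x2 \<in> B" "x3 \<in> B"
  have "meet (meet x1 x2) x3 = meet (meet (meet (p x1) (q x1)) x2) x3" using pq h by metis
  also have "\<dots> = meet (p x1) (meet (q x1) (meet x3 x2))" using e8 h D by metis
  also have "\<dots> = meet (q x1) (meet (meet x3 x2) (p x1))" using ax1 h D by metis
  also have "\<dots> = meet (meet x3 x2) x1" using e9 h D by metis
  finally show ?thesis .
qed
lemma e11: "\<lbrakk>x1 \<in> B; x2 \<in> B; x3 \<in> B\<rbrakk> \<Longrightarrow> meet (meet x1 x2) x3 = meet x3 (meet x1 x2)"
proof -
  assume h: "x1 \<in> B" "x2 \<in> B" "x3 \<in> B"
  have "meet (meet x1 x2) x3 = meet (meet x3 x2) x1" using e10 h by metis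
  also have "\<dots> = meet x3 (meet (meet x2 (q x1)) (p x1))" using e7 h D by metis
  also have "meet (meet x2 (q x1)) (p x1) = meet (meet (p x1) (q x1)) x2" using e10 h D by metis
  also have "meet (meet (p x1) (q x1)) x2 = meet x1 x2" using pq h by metis
  finally show ?thesis .
qed
lemma comm: "\<lbrakk>x \<in> B; y \<in> B\<rbrakk> \<Longrightarrow> meet x y = meet y x"
  by (metis e11 pq D)
lemma assoc: "\<lbrakk>x \<in> B; y \<in> B; z \<in> B\<rbrakk> \<Longrightarrow> meet (meet x y) z = meet x (meet y z)"
  by (metis e11 ax1 D)
lemma f7: "\<lbrakk>x1 \<in> B; x2 \<in> B; x3 \<in> B\<rbrakk> \<Longrightarrow> meet x1 (meet x2 x3) = meet x2 (meet x1 x3)"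
  by (metis comm assoc D)
lemma f8: "\<lbrakk>x1 \<in> B; x2 \<in> B; x3 \<in> B\<rbrakk> \<Longrightarrow> meet (cmp (meet (cmp x1) x2)) (meet (cmp (meet (cmp x1) (cmp x2))) x3) = meet x1 x3"
  by (metis assoc ax2 D)
lemma f9: "\<lbrakk>x1 \<in> B; x2 \<in> B\<rbrakk> \<Longrightarrow> meet (cmp (meet (cmp x1) x2)) (cmp (meet (cmp x2) (cmp x1))) = x1"
  by (metis comm ax2 D)
lemma f10: "\<lbrakk>x1 \<in> B; x2 \<in> B; x3 \<in> B\<rbrakk> \<Longrightarrow> meet (cmp (meet (cmp x1) x2)) (meet x3 (cmp (meet (cmp x1) (cmp x2)))) = meet x3 x1"
  by (metis f7 ax2 D)
lemma f11: "\<lbrakk>x1 \<in> B; x2 \<in> B\<rbrakk> \<Longrightarrow> meet x1 (cmp (meet (cmp (cmp x2)) (cmp x1))) = meet x1 (cmp (meet (cmp x1) x2))"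
  by (metis f8 f9 comm D)
lemma f12: "\<lbrakk>x1 \<in> B; x2 \<in> B; x3 \<in> B\<rbrakk> \<Longrightarrow> meet x1 (meet x2 x3) = meet x3 (meet x1 x2)"
  by (metis comm ax1 D)
lemma f13: "\<lbrakk>x1 \<in> B; x2 \<in> B\<rbrakk> \<Longrightarrow> meet x1 (meet (cmp (meet (cmp x1) x2)) (cmp (meet (cmp (cmp x2)) x1))) = meet x1 (cmp x2)"
  by (smt (verit) f10 f11 f12 comm f7 D)
lemma f14: "\<lbrakk>x1 \<in> B; x2 \<in> B\<rbrakk> \<Longrightarrow> meet (cmp (meet x1 (cmp x2))) (cmp (meet (cmp x1) (cmp x2))) = x2"
  by (metis f9 comm D)
lemma f15: "x1 \<in> B \<Longrightarrow> meet (cmp x1) (cmp (cmp x1)) = meet x1 (cmp x1)"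
  by (metis f13 f14 comm D)
lemma f17: "x1 \<in> B \<Longrightarrow> meet (cmp (meet x1 (cmp x1))) (cmp (meet x1 (cmp (cmp x1)))) = cmp x1"
  by (metis f14 f15 comm D)
lemma f19: "x \<in> B \<Longrightarrow> cmp (cmp x) = x"
  by (metis ax2 f17 D)
end

theorem lemma4p24:
  fixes B :: "'a set" and meet :: "'a \<Rightarrow> 'a \<Rightarrow> 'a" and cmp :: "'a \<Rightarrow> 'a"
  assumes meet_closed: "\<And>x y. x \<in> B \<Longrightarrow> y \<in> B \<Longrightarrow> meet x y \<in> B"
    and cmp_closed: "\<And>x. x \<in> B \<Longrightarrow> cmp x \<in> B"
    and ax1: "\<And>x y z. x \<in> B \<Longrightarrow> y \<in> B \<Longrightarrow> z \<in> B \<Longrightarrow>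
                meet x (meet y z) = meet y (meet z x)"
    and ax2: "\<And>x y. x \<in> B \<Longrightarrow> y \<in> B \<Longrightarrow>
                x = meet (cmp (meet (cmp x) y)) (cmp (meet (cmp x) (cmp y)))"
  shows "\<forall>x\<in>B. cmp (cmp x) = x"
proof -
  interpret L4 B meet cmp
    using assms by unfold_locales auto
  show ?thesis using f19 by blast
qed

end
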